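(* There exist constants $\beta\in(0,1)$, $C>0$ and $c>0$ such that for every $m>0$, every odd $n\ge5$, every $\epsilon\in(0,1)$ with $n\epsilon\ge C$, and every $\epsilon$-differentially private mechanism $\mathcal{M}:V^n\to V$, there is some $D\in\mathcal{CTM}$ with $$\mathrm{SWDIFF}(D,\mathcal{M}(D))\ge c\,\frac{m}{n\epsilon^2}\left(\ln\frac1\beta\right)^2$$ with probability at least $\beta$.
   Context: $V=[-m/2,m/2]$. A dataset is $D=(x_1,\dots,x_n)\in V^n$ (a multiset), indexed so that $x_1\le\dots\le x_n$, with median (optimal location) $\mathcal{T}(D)=x_{\lceil n/2\rceil}$. $\mathrm{SWDIFF}(D,\ell)=\sum_{i=1}^n|x_i-\ell|-\sum_{i=1}^n|x_i-\mathcal{T}(D)|$. $\mathcal{CTM}$ is the set of datasets with $|x_{i+1}-x_i|\ge|x_{j+1}-x_j|$ for all $1\le i<j\le\lceil n/2\rceil-1$ and $|x_i-x_{i-1}|\ge|x_j-x_{j-1}|$ for all $\lceil n/2\rceil+1\le j<i\le n$. Two datasets are neighboring if, as multisets, they differ in exactly one element; $\mathcal{M}$ is $\epsilon$-differentially private if $\Pr[\mathcal{M}(D)\in S]\le e^{\epsilon}\Pr[\mathcal{M}(D')\in S]$ for all neighboring $D,D'$ and measurable $S\subseteq V$. *)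

theory Defs
  imports "HOL-Probability.Probability" "HOL-Library.Multiset"
begin

definition Vdom :: "real \<Rightarrow> real set" where
  "Vdom m = {-m/2 .. m/2}"

definition datasets :: "real \<Rightarrow> nat \<Rightarrow> real multiset set" where
  "datasets m n = {D. size D = n \<and> set_mset D \<subseteq> Vdom m}"

text \<open>The i-th smallest element, 1-indexed: x_i.\<close>
definition xs :: "real multiset \<Rightarrow> nat \<Rightarrow> real" where
  "xs D i = sorted_list_of_multiset D ! (i - 1)"

definition median_loc :: "real multiset \<Rightarrow> real" where
  "median_loc D = xs D (nat \<lceil>real (size D) / 2\<rceil>)"

definition SWDIFF :: "real multiset \<Rightarrow> real \<Rightarrow> real" where
  "SWDIFF D l = (\<Sum>x\<in>#D. \<bar>x - l\<bar>) - (\<Sum>x\<in>#D. \<bar>x - median_loc D\<bar>)"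

definition CTM :: "real multiset set" where
  "CTM = {D. let n = size D; k = nat \<lceil>real n / 2\<rceil> in
      (\<forall>i j. 1 \<le> i \<and> i < j \<and> j \<le> k - 1 \<longrightarrow>
          \<bar>xs D (i+1) - xs D i\<bar> \<ge> \<bar>xs D (j+1) - xs D j\<bar>) \<and>
      (\<forall>i j. k + 1 \<le> j \<and> j < i \<and> i \<le> n \<longrightarrow>
          \<bar>xs D i - xs D (i-1)\<bar> \<ge> \<bar>xs D j - xs D (j-1)\<bar>)}"

text \<open>Neighboring datasets: as multisets they differ in exactly one element
  (same size, one element replaced).\<close>
definition neighboring :: "real multiset \<Rightarrow> real multiset \<Rightarrow> bool" where
  "neighboring D D' \<longleftrightarrow> size D = size D' \<and> size (D - D') = 1"

definition mechanism :: "real \<Rightarrow> nat \<Rightarrow> (real multiset \<Rightarrow> real measure) \<Rightarrow> bool" where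
  "mechanism m n M \<longleftrightarrow> (\<forall>D\<in>datasets m n.
      prob_space (M D) \<and> sets (M D) = sets borel \<and> measure (M D) (Vdom m) = 1)"

definition differentially_private ::
  "real \<Rightarrow> nat \<Rightarrow> real \<Rightarrow> (real multiset \<Rightarrow> real measure) \<Rightarrow> bool" where
  "differentially_private m n \<epsilon> M \<longleftrightarrow>
     (\<forall>D\<in>datasets m n. \<forall>D'\<in>datasets m n. neighboring D D' \<longrightarrow>
        (\<forall>S\<in>sets borel. S \<subseteq> Vdom m \<longrightarrow>
            measure (M D) S \<le> exp \<epsilon> * measure (M D') S))"

end

theory Submission
  imports Defs
begin

definition grid :: "real \<Rightarrow> real \<Rightarrow> nat \<Rightarrow> int \<Rightarrow> real multiset" where
  "grid a d t c = mset (map (\<lambda>i. a + of_int i * d) [c - int t..c + int t])"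

lemma grid_sorted:
  assumes "d > 0"
  shows "sorted_list_of_multiset (grid a d t c) = map (\<lambda>i. a + of_int i * d) [c - int t..c + int t]"
proof -
  have "sorted (map (\<lambda>i. a + of_int i * d) [c - int t..c + int t])"
    unfolding sorted_map by (rule sorted_wrt_mono_rel[OF _ sorted_upto]) (use assms in auto)
  then show ?thesis unfolding grid_def by (simp only: sorted_list_of_multiset_mset sorted_sort_id)
qed

lemma grid_size[simp]: "size (grid a d t c) = 2*t+1"
  unfolding grid_def by simp

lemma grid_xs:
  assumes "d > 0" "1 \<le> i" "i \<le> 2*t+1"
  shows "xs (grid a d t c) i = a + of_int (c - int t + int i - 1) * d"
proof -
  have "[c - int t..c + int t] ! (i-1) = c - int t + int (i-1)"
    by (rule nth_upto) (use assms in auto)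
  then show ?thesis unfolding xs_def grid_sorted[OF assms(1)] using assms by (simp add: of_nat_diff)
qed

lemma ceil_half: "nat \<lceil>real (2*t+1) / 2\<rceil> = t+1"
proof -
  have "real (2*t+1)/2 = real t + 1/2" by simp
  then have "\<lceil>real (2*t+1) / 2\<rceil> = int t + 1" by linarith
  then show ?thesis by simp
qed

lemma grid_median:
  assumes "d > 0"
  shows "median_loc (grid a d t c) = a + of_int c * d"
  unfolding median_loc_def grid_size ceil_half using grid_xs[OF assms, of "t+1" t a c] by simp

lemma grid_CTM:
  assumes "d > 0"
  shows "grid a d t c \<in> CTM"
proof -
  have "\<forall>i j. 1 \<le> i \<and> i < j \<and> j \<le> t \<longrightarrow>
          \<bar>xs (grid a d t c) (i+1) - xs (grid a d t c) i\<bar> \<ge> \<bar>xs (grid a d t c) (j+1) - xs (grid a d t c) j\<bar>"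
    by (auto simp: grid_xs[OF assms] algebra_simps)
  moreover have "\<forall>i j. t + 2 \<le> j \<and> j < i \<and> i \<le> 2*t+1 \<longrightarrow>
          \<bar>xs (grid a d t c) i - xs (grid a d t c) (i-1)\<bar> \<ge> \<bar>xs (grid a d t c) j - xs (grid a d t c) (j-1)\<bar>"
    by (auto simp: grid_xs[OF assms] algebra_simps of_nat_diff)
  ultimately show ?thesis unfolding CTM_def mem_Collect_eq Let_def grid_size ceil_half by simp
qed


lemma sum_mset_grid:
  "(\<Sum>x\<in>#grid a d t c. g x) = (\<Sum>i\<in>{c - int t..c + int t}. g (a + of_int i * d))"
  unfolding grid_def mset_map[symmetric] sum_mset_sum_list map_map sum_set_upto_conv_sum_list_int[symmetric]
  by (simp add: comp_def)

lemma sym_sum: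
  "(\<Sum>i\<in>{c - int t..c + int t}. h i) = h c + (\<Sum>k\<in>{1..t}. h (c + int k) + h (c - int k))"
proof (induction t)
  case 0
  then show ?case by simp
next
  case (Suc t)
  have e: "{c - int (Suc t)..c + int (Suc t)} = insert (c - int (Suc t)) (insert (c + int (Suc t)) {c - int t..c + int t})"
    by auto
  have "(\<Sum>i\<in>{c - int (Suc t)..c + int (Suc t)}. h i) = h (c - int (Suc t)) + h (c + int (Suc t)) + (\<Sum>i\<in>{c - int t..c + int t}. h i)"
    unfolding e by (simp add: algebra_simps)
  then show ?case using Suc by (simp add: algebra_simps)
qed

lemma gauss_real: "(\<Sum>k\<in>{1..j}. real k) = real j * (real j + 1) / 2"
  by (induction j) (auto simp: field_simps)

lemma SW_bound:
  assumes "d > 0" "j \<le> t"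
  shows "SWDIFF (grid a d t c) l \<ge> (2 * real j + 1) * \<bar>l - (a + of_int c * d)\<bar> - real j * (real j + 1) * d"
proof -
  define f where "f = (\<lambda>i::int. a + of_int i * d)"
  define u where "u = l - f c"
  define h where "h = (\<lambda>i. \<bar>f i - l\<bar> - \<bar>f i - f c\<bar>)"
  have sw: "SWDIFF (grid a d t c) l = (\<Sum>i\<in>{c - int t..c + int t}. h i)"
    unfolding SWDIFF_def grid_median[OF assms(1)] sum_mset_grid h_def f_def by (simp add: sum_subtractf)
  have hc: "h c = \<bar>u\<bar>" unfolding h_def u_def by simp
  have hk: "h (c + int k) + h (c - int k) = \<bar>real k * d - u\<bar> + \<bar>real k * d + u\<bar> - 2 * (real k * d)" for k
    unfolding h_def u_def f_def using assms(1) by (simp add: algebra_simps abs_mult)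
  have q0: "h (c + int k) + h (c - int k) \<ge> 0" for k
    unfolding hk by linarith
  have q1: "h (c + int k) + h (c - int k) \<ge> 2 * (\<bar>u\<bar> - real k * d)" for k
    unfolding hk by (auto split: abs_split)
  have "(\<Sum>k\<in>{1..t}. h (c + int k) + h (c - int k)) \<ge> (\<Sum>k\<in>{1..j}. h (c + int k) + h (c - int k))"
    by (rule sum_mono2) (use assms q0 in auto)
  moreover have "(\<Sum>k\<in>{1..j}. h (c + int k) + h (c - int k)) \<ge> (\<Sum>k\<in>{1..j}. 2 * (\<bar>u\<bar> - real k * d))"
    by (rule sum_mono) (rule q1)
  moreover have "(\<Sum>k\<in>{1..j}. 2 * (\<bar>u\<bar> - real k * d)) = 2 * real j * \<bar>u\<bar> - real j * (real j + 1) * d"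
  proof -
    have "(\<Sum>k\<in>{1..j}. 2 * (\<bar>u\<bar> - real k * d)) = (\<Sum>k\<in>{1..j}. 2 * \<bar>u\<bar> - real k * (2 * d))"
      by (rule sum.cong) (auto simp: algebra_simps)
    also have "\<dots> = real j * (2 * \<bar>u\<bar>) - (\<Sum>k\<in>{1..j}. real k) * (2 * d)"
      by (simp only: sum_subtractf sum_distrib_right[symmetric]) simp
    also have "\<dots> = 2 * real j * \<bar>u\<bar> - real j * (real j + 1) * d"
      unfolding gauss_real by (simp add: algebra_simps)
    finally show ?thesis .
  qed
  ultimately show ?thesis unfolding sw sym_sum hc u_def f_def by (simp add: algebra_simps)
qed


lemma grid_neighboring: "neighboring (grid a d t c) (grid a d t (c+1))" if "d > 0"
proof -
  let ?f = "\<lambda>i::int. a + of_int i * d"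
  define B where "B = mset (map ?f [c - int t + 1..c + int t])"
  have l1: "[c - int t..c + int t] = (c - int t) # [c - int t + 1..c + int t]"
    by (rule upto_rec1) simp
  have l2: "[c + 1 - int t..c + 1 + int t] = [c - int t + 1..c + int t] @ [c + int t + 1]"
    using upto_rec2[of "c + 1 - int t" "c + 1 + int t"] by (simp add: algebra_simps)
  have g1: "grid a d t c = add_mset (?f (c - int t)) B" unfolding grid_def B_def l1 by simp
  have g2: "grid a d t (c+1) = add_mset (?f (c + int t + 1)) B" unfolding grid_def B_def l2 by simp
  have ne: "?f (c - int t) \<noteq> ?f (c + int t + 1)" using that by simp
  have "grid a d t c - grid a d t (c+1) = {#?f (c - int t)#}"
    unfolding g1 g2 using ne by simp
  then show ?thesis unfolding neighboring_def by simp
qed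

lemma abs_sum_meas: "(\<lambda>l::real. \<Sum>x\<in>#D. \<bar>x - l\<bar>) \<in> borel_measurable borel"
proof (induction D)
  case empty
  then show ?case by simp
next
  case (add x D)
  have "(\<lambda>l. \<bar>x - l\<bar>) \<in> borel_measurable borel"
    by (intro borel_measurable_continuous_onI continuous_intros)
  then show ?case using add by simp
qed

lemma SW_meas[measurable]: "(\<lambda>l. SWDIFF D l) \<in> borel_measurable borel"
  unfolding SWDIFF_def using abs_sum_meas[of D] by simp

lemma SW_set_meas: "{l. T \<le> SWDIFF D l} \<in> sets borel" "{l\<in>Vdom m. SWDIFF D l < T} \<in> sets borel"
  unfolding Vdom_def by measurable


lemma main_bound:
  fixes m \<epsilon> :: real and n :: nat and M :: "real multiset \<Rightarrow> real measure"
  assumes hm: "m > 0" and hodd: "odd n" and hn5: "n \<ge> 5" and he0: "0 < \<epsilon>" and he1: "\<epsilon> < 1"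
    and hC: "real n * \<epsilon> \<ge> 1" and hM: "mechanism m n M" and hDP: "differentially_private m n \<epsilon> M"
  shows "\<exists>D\<in>datasets m n. D \<in> CTM \<and>
          measure (M D) {l. SWDIFF D l \<ge> (1/1000) * (m / (real n * \<epsilon>\<^sup>2)) * (ln (1 / (1/4)))\<^sup>2}
            \<ge> 1/4"
proof -
  obtain t where nt: "n = 2*t+1" using hodd oddE by blast
  define d where "d = m / (2 * real n)"
  define a where "a = - m / 2"
  have dpos: "d > 0" unfolding d_def using hm hn5 by simp
  define y where "y = 1 / \<epsilon>"
  have y1: "y > 1" unfolding y_def using he0 he1 by simp
  define j where "j = nat \<lfloor>(y - 1) / 2\<rfloor>"
  have fl0: "\<lfloor>(y - 1) / 2\<rfloor> \<ge> 0" using y1 by simp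
  have jr: "real j = of_int \<lfloor>(y - 1) / 2\<rfloor>" unfolding j_def using fl0 by simp
  obtain z where z: "real j = z" "z \<le> (y-1)/2" "z > (y-1)/2 - 1"
    using jr of_int_floor_le[of "(y-1)/2"] real_of_int_floor_gt_diff_one[of "(y-1)/2"] by blast
  have z2: "2 * z \<le> y - 1" "2 * z > y - 3" using z(2,3) by (simp_all add: field_simps)
  have jle: "2 * real j + 1 \<le> y" using z(1) z2 by linarith
  have jgt: "2 * real j + 1 > y - 2" using z(1) z2 by linarith
  define s where "s = 2*j+1"
  have sr: "real s = 2 * real j + 1" unfolding s_def by simp
  have s_eps: "real s * \<epsilon> \<le> 1"
    using jle he0 unfolding sr y_def by (simp add: field_simps)
  have j0: "real j \<ge> 0" by simp
  have y6: "y \<le> 6 * real j + 3"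
  proof (cases "y \<ge> 3")
    case True
    then show ?thesis using jgt j0 by linarith
  next
    case False
    then show ?thesis using j0 by linarith
  qed
  have s_ge: "real s * 3 \<ge> y"
    using y6 unfolding sr by (simp add: algebra_simps)
  have s_eps3: "real s * \<epsilon> \<ge> 1/3"
    using s_ge he0 unfolding y_def by (simp add: field_simps)
  have yn: "y \<le> real n" unfolding y_def using hC he0 by (simp add: field_simps)
  have "real s \<le> real n" using jle yn sr by linarith
  then have sn: "s \<le> n" by simp
  have jt: "j \<le> t" using sn nt unfolding s_def by simp
  define D where "D = (\<lambda>k::nat. grid a d t (int t + int k))"
  have DCTM: "D k \<in> CTM" for k unfolding D_def by (rule grid_CTM[OF dpos])
  have Dds: "D k \<in> datasets m n" if "k \<le> s" for k
  proof -
    have "set_mset (D k) \<subseteq> Vdom m"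
    proof
      fix x assume "x \<in># D k"
      then have "x \<in> (\<lambda>i. a + of_int i * d) ` {int k..int k + 2 * int t}"
        unfolding D_def grid_def by (simp add: algebra_simps)
      then obtain i where i: "i \<in> {int k..int k + 2 * int t}" "x = a + of_int i * d"
        by blast
      have i0: "0 \<le> of_int i * d" using i dpos by simp
      have "real_of_int i \<le> 2 * real n" using i that sn nt by simp
      then have "of_int i * d \<le> 2 * real n * d" using dpos by (simp add: mult_right_mono)
      also have "2 * real n * d = m" unfolding d_def using hn5 by simp
      finally show "x \<in> Vdom m" unfolding Vdom_def using i i0 unfolding a_def by simp
    qed
    then show ?thesis unfolding datasets_def D_def using nt by simp
  qed
  have Dnb: "neighboring (D k) (D (Suc k))" for k
    using grid_neighboring[OF dpos, of a t "int t + int k"] unfolding D_def by (simp add: algebra_simps)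
  have chain: "\<forall>S\<in>sets borel. S \<subseteq> Vdom m \<longrightarrow> measure (M (D 0)) S \<le> exp (real k * \<epsilon>) * measure (M (D k)) S"
    if "k \<le> s" for k
    using that
  proof (induction k)
    case 0
    then show ?case by simp
  next
    case (Suc k)
    show ?case
    proof (intro ballI impI)
      fix S assume S: "S \<in> sets borel" "S \<subseteq> Vdom m"
      have "measure (M (D 0)) S \<le> exp (real k * \<epsilon>) * measure (M (D k)) S"
        using Suc S by simp
      also have "measure (M (D k)) S \<le> exp \<epsilon> * measure (M (D (Suc k))) S"
        using hDP S Dds[of k] Dds[of "Suc k"] Suc.prems Dnb[of k] unfolding differentially_private_def by simp
      then have "exp (real k * \<epsilon>) * measure (M (D k)) S \<le> exp (real k * \<epsilon>) * (exp \<epsilon> * measure (M (D (Suc k))) S)"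
        by (simp add: mult_left_mono)
      also have "\<dots> = exp (real (Suc k) * \<epsilon>) * measure (M (D (Suc k))) S"
        by (simp add: algebra_simps exp_add[symmetric])
      finally show "measure (M (D 0)) S \<le> exp (real (Suc k) * \<epsilon>) * measure (M (D (Suc k))) S" .
    qed
  qed
  define Q where "Q = m / (real n * \<epsilon>\<^sup>2)"
  define T where "T = (1/1000) * Q * (ln (1 / (1/4::real)))\<^sup>2"
  have Qpos: "Q > 0" unfolding Q_def using hm he0 hn5 by simp
  have dQ: "d = Q * \<epsilon>\<^sup>2 / 2" unfolding Q_def d_def using he0 hn5 by (simp add: field_simps power2_eq_square)
  have L: "ln (1 / (1/4::real)) \<le> 3" "0 \<le> ln (1 / (1/4::real))"
    using ln_le_minus_one[of "4::real"] by simp_all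
  have L2: "(ln (1 / (1/4::real)))\<^sup>2 \<le> 9"
    using power_mono[OF L(1) L(2), of 2] by simp
  have TQ: "T \<le> Q / 72" unfolding T_def using L2 Qpos by simp
  have s2: "(real s * \<epsilon>)\<^sup>2 \<ge> 1/9"
    using power_mono[OF s_eps3, of 2] by (simp add: power2_eq_square)
  have big: "real s * real s * d / 4 \<ge> Q / 72"
  proof -
    have "real s * real s * d / 4 = (real s * \<epsilon>)\<^sup>2 * Q / 8"
      unfolding dQ by (simp add: power2_eq_square field_simps)
    also have "\<dots> \<ge> (1/9) * Q / 8" using s2 Qpos by (simp add: divide_right_mono mult_right_mono)
    finally show ?thesis by simp
  qed
  have SWk: "SWDIFF (D k) l \<ge> (2 * real j + 1) * \<bar>l - (a + real_of_int (int t + int k) * d)\<bar> - real j * (real j + 1) * d"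
    for k l unfolding D_def by (rule SW_bound[OF dpos jt])
  have key: "T \<le> SWDIFF (D 0) l \<or> T \<le> SWDIFF (D s) l" for l
  proof -
    have gen: "SWDIFF (D k) l \<ge> real s * real s * d / 4"
      if "\<bar>l - (a + real_of_int (int t + int k) * d)\<bar> \<ge> real s * d / 2" for k
    proof -
      have "(2 * real j + 1) * \<bar>l - (a + real_of_int (int t + int k) * d)\<bar> \<ge> (2 * real j + 1) * (real s * d / 2)"
        using that by (intro mult_left_mono) auto
      then have "SWDIFF (D k) l \<ge> (2 * real j + 1) * (real s * d / 2) - real j * (real j + 1) * d"
        using SWk[where k=k and l=l] by linarith
      moreover have "(2 * real j + 1) * (real s * d / 2) - real j * (real j + 1) * d \<ge> real s * real s * d / 4"
        using dpos unfolding sr by (simp add: algebra_simps)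
      ultimately show ?thesis by linarith
    qed
    have "\<bar>l - (a + real_of_int (int t + int 0) * d)\<bar> + \<bar>l - (a + real_of_int (int t + int s) * d)\<bar> \<ge> real s * d"
      using dpos by (simp add: algebra_simps)
    then have "\<bar>l - (a + real_of_int (int t + int 0) * d)\<bar> \<ge> real s * d / 2 \<or> \<bar>l - (a + real_of_int (int t + int s) * d)\<bar> \<ge> real s * d / 2"
      by linarith
    then show ?thesis using gen[of 0] gen[of s] big TQ by linarith
  qed
  show ?thesis
  proof (rule ccontr)
    assume neg: "\<not> ?thesis"
    have n0: "measure (M (D 0)) {l. T \<le> SWDIFF (D 0) l} < 1/4"
      using neg Dds[of 0] DCTM[of 0] unfolding T_def Q_def by auto
    have ns: "measure (M (D s)) {l. T \<le> SWDIFF (D s) l} < 1/4"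
      using neg Dds[of s] DCTM[of s] unfolding T_def Q_def by auto
    define A where "A = {l\<in>Vdom m. SWDIFF (D 0) l < T}"
    have Ameas: "A \<in> sets borel" unfolding A_def by (rule SW_set_meas)
    have P0: "prob_space (M (D 0))" "sets (M (D 0)) = sets borel" "measure (M (D 0)) (Vdom m) = 1"
      using hM Dds[of 0] unfolding mechanism_def by auto
    have Ps: "prob_space (M (D s))" "sets (M (D s)) = sets borel"
      using hM Dds[of s] unfolding mechanism_def by auto
    have B0: "{l. T \<le> SWDIFF (D 0) l} \<in> sets (M (D 0))" using P0(2) SW_set_meas(1) by simp
    have Bs: "{l. T \<le> SWDIFF (D s) l} \<in> sets (M (D s))" using Ps(2) SW_set_meas(1) by simp
    have A0: "A \<in> sets (M (D 0))" using P0(2) Ameas by simp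
    interpret p0: prob_space "M (D 0)" by (rule P0(1))
    interpret ps: prob_space "M (D s)" by (rule Ps(1))
    have "Vdom m \<subseteq> A \<union> {l. T \<le> SWDIFF (D 0) l}" unfolding A_def by auto
    then have "measure (M (D 0)) (Vdom m) \<le> measure (M (D 0)) (A \<union> {l. T \<le> SWDIFF (D 0) l})"
      using A0 B0 by (intro p0.finite_measure_mono) auto
    also have "\<dots> \<le> measure (M (D 0)) A + measure (M (D 0)) {l. T \<le> SWDIFF (D 0) l}"
      using A0 B0 by (rule measure_Un_le)
    finally have m0: "1 \<le> measure (M (D 0)) A + measure (M (D 0)) {l. T \<le> SWDIFF (D 0) l}"
      using P0(3) by simp
    have "A \<subseteq> {l. T \<le> SWDIFF (D s) l}" unfolding A_def using key by force
    then have ms: "measure (M (D s)) A \<le> measure (M (D s)) {l. T \<le> SWDIFF (D s) l}"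
      using Bs by (intro ps.finite_measure_mono) auto
    have "A \<subseteq> Vdom m" unfolding A_def by auto
    then have "measure (M (D 0)) A \<le> exp (real s * \<epsilon>) * measure (M (D s)) A"
      using chain[of s] Ameas by simp
    also have "\<dots> \<le> 3 * measure (M (D s)) A"
    proof (rule mult_right_mono)
      have "exp (real s * \<epsilon>) \<le> exp 1" using s_eps by simp
      then show "exp (real s * \<epsilon>) \<le> 3" using exp_le by linarith
    qed simp
    finally show False using m0 ms n0 ns by linarith
  qed
qed

theorem theorem7p22:
  shows "\<exists>\<beta>::real. 0 < \<beta> \<and> \<beta> < 1 \<and> (\<exists>C::real. C > 0 \<and> (\<exists>c::real. c > 0 \<and>
    (\<forall>(m::real) (n::nat) (\<epsilon>::real) (M :: real multiset \<Rightarrow> real measure).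
       m > 0 \<and> odd n \<and> n \<ge> 5 \<and> 0 < \<epsilon> \<and> \<epsilon> < 1 \<and> real n * \<epsilon> \<ge> C \<and>
       mechanism m n M \<and> differentially_private m n \<epsilon> M \<longrightarrow>
       (\<exists>D\<in>datasets m n. D \<in> CTM \<and>
          measure (M D) {l. SWDIFF D l \<ge> c * (m / (real n * \<epsilon>\<^sup>2)) * (ln (1 / \<beta>))\<^sup>2}
            \<ge> \<beta>))))"
  apply (rule exI[of _ "1/4"])
  apply (intro conjI)
    apply simp
   apply simp
  apply (rule exI[of _ 1])
  apply (intro conjI)
   apply simp
  apply (rule exI[of _ "1/1000"])
  apply (intro conjI)
   apply simp
  apply (intro allI impI)
  apply (elim conjE)
  apply (rule main_bound)
         apply assumption+
  done

end
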